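(* Let $n\ge2$, $q\in\mathbb C$ a primitive $n$-th root of unity, and $u_q(sl_2)$ the $\mathbb C$-algebra with generators $K,E,F$ and relations $K^n=1$, $E^n=F^n=0$, $EK=qKE$, $FK=q^{-1}KF$, $EF-FE=\frac{K-K^{-1}}{q-q^{-1}}$, with basis $\{K^iF^jE^k:0\le i,j,k\le n-1\}$. Let $\int$ be the linear functional with $\int KF^{n-1}E^{n-1}=1$ and zero on all other basis monomials, giving the standard Frobenius form $(a,b)=\int ab$. For an invertible $u\in u_q(sl_2)$ consider the twisted Frobenius form $(a,b)_u:=\int uab$, with inverse $g_u=\sum g_u^1\otimes g_u^2$ and $\ell_u:=\sum g_u^1g_u^2$. Then $\ell_u$ depends only on the component of $u^{-1}$ in $u_q(sl_2)_0$: if $u,v$ are invertible and $u^{-1}$ and $v^{-1}$ have the same component in $u_q(sl_2)_0$, then $\ell_u=\ell_v$.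
   Context: For a Frobenius form $(\ ,\ )$ (bilinear, $(ab,c)=(a,bc)$, nondegenerate), its inverse is $g=\sum g^1\otimes g^2$ with $\sum(a,g^1)g^2=a=\sum g^1(g^2,a)$ for all $a$. The $\mathbb Z/n\mathbb Z$-grading of $u_q(sl_2)$ gives the basis monomial $K^iF^jE^k$ degree $j-k$ mod $n$; $u_q(sl_2)_0$ is the degree-$0$ part, i.e. the span of the monomials $K^iF^jE^j$, and the component of an element in $u_q(sl_2)_0$ is its projection onto this span along the other graded parts. *)

theory Defs
  imports Complex_Main
begin

definition idx :: "nat \<Rightarrow> (nat \<times> nat \<times> nat) set" where
  "idx n = {..<n} \<times> {..<n} \<times> {..<n}"

definition mono :: "'a::ring_1 \<Rightarrow> 'a \<Rightarrow> 'a \<Rightarrow> nat \<times> nat \<times> nat \<Rightarrow> 'a" where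
  "mono K F E m = (case m of (i, j, k) \<Rightarrow> K ^ i * F ^ j * E ^ k)"

text \<open>Complex scalars act on the algebra through the central unital embedding emb.\<close>
definition lincomb :: "(complex \<Rightarrow> 'a::ring_1) \<Rightarrow> nat \<Rightarrow> 'a \<Rightarrow> 'a \<Rightarrow> 'a
    \<Rightarrow> (nat \<times> nat \<times> nat \<Rightarrow> complex) \<Rightarrow> 'a" where
  "lincomb emb n K F E c = (\<Sum>m\<in>idx n. emb (c m) * mono K F E m)"

definition is_pbw_basis :: "(complex \<Rightarrow> 'a::ring_1) \<Rightarrow> nat \<Rightarrow> 'a \<Rightarrow> 'a \<Rightarrow> 'a \<Rightarrow> bool" where
  "is_pbw_basis emb n K F E \<longleftrightarrow>
     (\<forall>x. \<exists>!c. (\<forall>m. m \<notin> idx n \<longrightarrow> c m = 0) \<and> x = lincomb emb n K F E c)"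

definition coord :: "(complex \<Rightarrow> 'a::ring_1) \<Rightarrow> nat \<Rightarrow> 'a \<Rightarrow> 'a \<Rightarrow> 'a \<Rightarrow> 'a
    \<Rightarrow> nat \<times> nat \<times> nat \<Rightarrow> complex" where
  "coord emb n K F E x =
     (THE c. (\<forall>m. m \<notin> idx n \<longrightarrow> c m = 0) \<and> x = lincomb emb n K F E c)"

definition integral_uq :: "(complex \<Rightarrow> 'a::ring_1) \<Rightarrow> nat \<Rightarrow> 'a \<Rightarrow> 'a \<Rightarrow> 'a \<Rightarrow> 'a \<Rightarrow> complex" where
  "integral_uq emb n K F E x = coord emb n K F E x (1, n - 1, n - 1)"

definition twform :: "(complex \<Rightarrow> 'a::ring_1) \<Rightarrow> nat \<Rightarrow> 'a \<Rightarrow> 'a \<Rightarrow> 'a \<Rightarrow> 'a \<Rightarrow> 'a \<Rightarrow> 'a \<Rightarrow> complex" where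
  "twform emb n K F E u a b = integral_uq emb n K F E (u * a * b)"

text \<open>A finite list of pairs gs represents the inverse g = sum g1 (x) g2 of a bilinear form B.\<close>
definition is_form_inverse :: "(complex \<Rightarrow> 'a::ring_1) \<Rightarrow> ('a \<Rightarrow> 'a \<Rightarrow> complex) \<Rightarrow> ('a \<times> 'a) list \<Rightarrow> bool" where
  "is_form_inverse emb B gs \<longleftrightarrow>
     (\<forall>a. (\<Sum>(g1, g2)\<leftarrow>gs. emb (B a g1) * g2) = a \<and>
          (\<Sum>(g1, g2)\<leftarrow>gs. g1 * emb (B g2 a)) = a)"

definition ell :: "('a::ring_1 \<times> 'a) list \<Rightarrow> 'a" where
  "ell gs = (\<Sum>(g1, g2)\<leftarrow>gs. g1 * g2)"

text \<open>Projection onto u_q(sl_2)_0 = span of K^i F^j E^j.\<close>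
definition deg0 :: "(complex \<Rightarrow> 'a::ring_1) \<Rightarrow> nat \<Rightarrow> 'a \<Rightarrow> 'a \<Rightarrow> 'a \<Rightarrow> 'a \<Rightarrow> 'a" where
  "deg0 emb n K F E x =
     (\<Sum>m\<in>{m\<in>idx n. fst (snd m) = snd (snd m)}. emb (coord emb n K F E x m) * mono K F E m)"

end

theory Submission
  imports Defs
begin

lemma sl_mult_left: "c * (\<Sum>x\<leftarrow>xs. f x) = (\<Sum>x\<leftarrow>xs. c * f x)" for c :: "'a::ring_1"
  by (induction xs) (simp_all add: distrib_left)

lemma sl_mult_right: "(\<Sum>x\<leftarrow>xs. f x) * c = (\<Sum>x\<leftarrow>xs. f x * c)" for c :: "'a::ring_1"
  by (induction xs) (simp_all add: distrib_right)

lemma sl_swap: "(\<Sum>x\<leftarrow>xs. \<Sum>y\<leftarrow>ys. f x y) = (\<Sum>y\<leftarrow>ys. \<Sum>x\<leftarrow>xs. f x y :: 'a::ring_1)"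
  by (induction xs) (simp_all add: sum_list_addf)

lemma ell_unique:
  assumes g: "is_form_inverse emb B gs" and h: "is_form_inverse emb B hs"
  shows "ell gs = ell hs"
proof -
  have e1: "\<And>a. (\<Sum>p\<leftarrow>hs. fst p * emb (B (snd p) a)) = a"
    using h unfolding is_form_inverse_def by (simp add: case_prod_unfold)
  have e2: "\<And>a. (\<Sum>p\<leftarrow>gs. emb (B a (fst p)) * snd p) = a"
    using g unfolding is_form_inverse_def by (simp add: case_prod_unfold)
  have "ell gs = (\<Sum>p\<leftarrow>gs. fst p * snd p)" unfolding ell_def by (simp add: case_prod_unfold)
  also have "\<dots> = (\<Sum>p\<leftarrow>gs. (\<Sum>r\<leftarrow>hs. fst r * emb (B (snd r) (fst p))) * snd p)"
    using e1 by simp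
  also have "\<dots> = (\<Sum>p\<leftarrow>gs. \<Sum>r\<leftarrow>hs. fst r * (emb (B (snd r) (fst p)) * snd p))"
    by (simp add: sl_mult_right mult.assoc)
  also have "\<dots> = (\<Sum>r\<leftarrow>hs. \<Sum>p\<leftarrow>gs. fst r * (emb (B (snd r) (fst p)) * snd p))"
    by (rule sl_swap)
  also have "\<dots> = (\<Sum>r\<leftarrow>hs. fst r * (\<Sum>p\<leftarrow>gs. emb (B (snd r) (fst p)) * snd p))"
    by (simp add: sl_mult_left)
  also have "\<dots> = (\<Sum>r\<leftarrow>hs. fst r * snd r)" using e2 by simp
  also have "\<dots> = ell hs" unfolding ell_def by (simp add: case_prod_unfold)
  finally show ?thesis .
qed

lemma transfer_inv:
  assumes central: "\<forall>c a. emb c * a = a * emb c"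
    and g: "is_form_inverse emb B gs"
    and B': "\<And>a b. B' a b = B (s * a) b" and ts: "t * s = 1" and st: "s * t = 1"
  shows "is_form_inverse emb B' (map (\<lambda>(a, b). (a, t * b)) gs)"
proof -
  have e1: "\<And>a. (\<Sum>p\<leftarrow>gs. fst p * emb (B (snd p) a)) = a"
    using g unfolding is_form_inverse_def by (simp add: case_prod_unfold)
  have e2: "\<And>a. (\<Sum>p\<leftarrow>gs. emb (B a (fst p)) * snd p) = a"
    using g unfolding is_form_inverse_def by (simp add: case_prod_unfold)
  have cc: "\<And>c x. emb c * (t * x) = t * (emb c * x)" by (metis central mult.assoc)
  have A: "(\<Sum>p\<leftarrow>gs. emb (B' a (fst p)) * (t * snd p)) = a" for a
  proof -
    have "(\<Sum>p\<leftarrow>gs. emb (B' a (fst p)) * (t * snd p)) = (\<Sum>p\<leftarrow>gs. t * (emb (B (s * a) (fst p)) * snd p))"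
      by (simp add: B' cc)
    also have "\<dots> = t * (s * a)" by (simp add: sl_mult_left[symmetric] e2)
    finally show ?thesis by (simp add: mult.assoc[symmetric] ts)
  qed
  have Bb: "\<And>x. B' (t * x) a = B x a" for a
    by (simp add: B' mult.assoc[symmetric] st)
  show ?thesis unfolding is_form_inverse_def
    using A e1 by (simp add: case_prod_unfold o_def Bb)
qed


locale uq =
  fixes n :: nat and q :: complex and emb :: "complex \<Rightarrow> 'a::ring_1" and K E F :: 'a
  assumes n_pos: "n \<ge> 1" and qn: "q ^ n = 1" and prim: "\<forall>k. 0 < k \<and> k < n \<longrightarrow> q ^ k \<noteq> 1"
    and emb_add: "\<And>x y. emb (x + y) = emb x + emb y"
    and emb_mult: "\<And>x y. emb (x * y) = emb x * emb y"
    and emb_one: "emb 1 = 1"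
    and emb_central: "\<And>c a. emb c * a = a * emb c"
    and relK: "K ^ n = 1"
    and relEK: "E * K = emb q * K * E"
    and relFK: "F * K = emb (inverse q) * K * F"
    and basis: "is_pbw_basis emb n K F E"
begin

abbreviation "lc \<equiv> lincomb emb n K F E"
abbreviation "co \<equiv> coord emb n K F E"
abbreviation "I \<equiv> integral_uq emb n K F E"
abbreviation "mo \<equiv> mono K F E"

lemma emb_zero: "emb 0 = 0"
  using emb_add[of 0 0] by simp

lemma emb_pow: "emb (x ^ k) = emb x ^ k"
  by (induction k) (simp_all add: emb_one emb_mult)

lemma cl: "a * (emb c * b) = emb c * (a * b)"
  by (metis emb_central mult.assoc)

lemma fin_idx: "finite (idx n)" unfolding idx_def by simp

lemma lc_add: "lc (\<lambda>m. c m + d m) = lc c + lc d"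
  unfolding lincomb_def by (simp add: emb_add distrib_right sum.distrib)

lemma lc_smult: "lc (\<lambda>m. a * c m) = emb a * lc c"
  unfolding lincomb_def by (simp add: emb_mult sum_distrib_left mult.assoc)

lemma coord_unique:
  assumes "\<forall>m. m \<notin> idx n \<longrightarrow> c m = 0"
  shows "co (lc c) = c"
proof -
  have "\<exists>!c'. (\<forall>m. m \<notin> idx n \<longrightarrow> c' m = 0) \<and> lc c = lc c'"
    using basis unfolding is_pbw_basis_def by blast
  then show ?thesis unfolding coord_def
    by (rule the1_equality) (use assms in auto)
qed

lemma coord_spec: "(\<forall>m. m \<notin> idx n \<longrightarrow> co x m = 0) \<and> x = lc (co x)"
proof -
  have "\<exists>!c'. (\<forall>m. m \<notin> idx n \<longrightarrow> c' m = 0) \<and> x = lc c'"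
    using basis unfolding is_pbw_basis_def by blast
  then show ?thesis unfolding coord_def by (rule theI')
qed

lemma coord_eq: "x = lc (co x)" using coord_spec by blast
lemma coord_supp: "m \<notin> idx n \<Longrightarrow> co x m = 0" using coord_spec by blast

lemma coord_add: "co (x + y) = (\<lambda>m. co x m + co y m)"
proof -
  have "x + y = lc (co x) + lc (co y)"
    using arg_cong2[OF coord_eq[of x] coord_eq[of y], of "(+)"] .
  also have "\<dots> = lc (\<lambda>m. co x m + co y m)" by (rule lc_add[symmetric])
  finally have h: "x + y = lc (\<lambda>m. co x m + co y m)" .
  show ?thesis unfolding h by (rule coord_unique) (simp add: coord_supp)
qed

lemma coord_smult: "co (emb a * x) = (\<lambda>m. a * co x m)"
proof -
  have "emb a * x = emb a * lc (co x)"
    using arg_cong[OF coord_eq[of x], of "\<lambda>z. emb a * z"] .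
  also have "\<dots> = lc (\<lambda>m. a * co x m)" by (rule lc_smult[symmetric])
  finally have h: "emb a * x = lc (\<lambda>m. a * co x m)" .
  show ?thesis unfolding h by (rule coord_unique) (simp add: coord_supp)
qed

lemma coord_mono: assumes "m \<in> idx n" shows "co (mo m) = (\<lambda>m'. if m' = m then 1 else 0)"
proof -
  have "lc (\<lambda>m'. if m' = m then 1 else 0) = (\<Sum>m'\<in>idx n. if m' = m then mo m' else 0)"
    unfolding lincomb_def by (rule sum.cong) (auto simp: emb_one emb_zero)
  also have "\<dots> = mo m" using assms fin_idx by simp
  finally have h: "mo m = lc (\<lambda>m'. if m' = m then 1 else 0)" by simp
  show ?thesis unfolding h by (rule coord_unique) (use assms in auto)
qed

definition tgt :: "nat \<times> nat \<times> nat" where "tgt = (1, n - 1, n - 1)"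

lemma I_add: "I (x + y) = I x + I y"
  unfolding integral_uq_def by (simp add: coord_add)

lemma I_smult: "I (emb a * x) = a * I x"
  unfolding integral_uq_def by (simp add: coord_smult)

lemma I_zero: "I 0 = 0"
  using I_add[of 0 0] by simp

lemma I_sum: "finite A \<Longrightarrow> I (\<Sum>x\<in>A. f x) = (\<Sum>x\<in>A. I (f x))"
  by (induction A rule: finite_induct) (simp_all add: I_zero I_add)

lemma I_mono: "m \<in> idx n \<Longrightarrow> I (emb a * mo m) = (if m = tgt then a else 0)"
  unfolding I_smult unfolding integral_uq_def by (simp add: coord_mono tgt_def)

lemma EkK: "E ^ k * K = emb (q ^ k) * K * E ^ k"
proof (induction k)
  case 0 then show ?case by (simp add: emb_one)
next
  case (Suc k)
  have "E ^ Suc k * K = E * (E ^ k * K)" by (simp add: mult.assoc)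
  also have "\<dots> = E * emb (q ^ k) * K * E ^ k" using Suc by (simp add: mult.assoc)
  also have "\<dots> = emb (q ^ k) * (E * K) * E ^ k" by (simp only: cl mult.assoc)
  also have "\<dots> = emb (q ^ k) * emb q * K * (E * E ^ k)" by (simp add: relEK mult.assoc)
  also have "\<dots> = emb (q ^ k * q) * K * E ^ Suc k" by (simp add: emb_mult)
  also have "\<dots> = emb (q ^ Suc k) * K * E ^ Suc k" by (simp add: mult.commute)
  finally show ?case .
qed

lemma FjK: "F ^ k * K = emb (inverse q ^ k) * K * F ^ k"
proof (induction k)
  case 0 then show ?case by (simp add: emb_one)
next
  case (Suc k)
  have "F ^ Suc k * K = F * (F ^ k * K)" by (simp add: mult.assoc)
  also have "\<dots> = F * emb (inverse q ^ k) * K * F ^ k" using Suc by (simp add: mult.assoc)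
  also have "\<dots> = emb (inverse q ^ k) * (F * K) * F ^ k" by (simp only: cl mult.assoc)
  also have "\<dots> = emb (inverse q ^ k) * emb (inverse q) * K * (F * F ^ k)" by (simp add: relFK mult.assoc)
  also have "\<dots> = emb (inverse q ^ k * inverse q) * K * F ^ Suc k" by (simp add: emb_mult)
  also have "\<dots> = emb (inverse q ^ Suc k) * K * F ^ Suc k" by (simp add: mult.commute)
  finally show ?case .
qed

lemma K_pow_mod: "K ^ a = K ^ (a mod n)"
proof -
  have "K ^ a = K ^ (n * (a div n) + a mod n)" by (metis div_mult_mod_eq mult.commute)
  also have "\<dots> = K ^ (a mod n)" by (simp only: power_add power_mult relK power_one mult_1_left)
  finally show ?thesis .
qed

lemma K_mono: "K * mo (i, j, k) = mo (Suc i mod n, j, k)"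
proof -
  have "K * mo (i, j, k) = K ^ Suc i * F ^ j * E ^ k" unfolding mono_def by (simp add: mult.assoc)
  then show ?thesis using K_pow_mod[of "Suc i"] unfolding mono_def by simp
qed

lemma mono_K: "mo (i, j, k) * K = emb (q ^ k * inverse q ^ j) * (K * mo (i, j, k))"
proof -
  have "mo (i, j, k) * K = K ^ i * F ^ j * (E ^ k * K)" unfolding mono_def by (simp add: mult.assoc)
  also have "\<dots> = K ^ i * (F ^ j * emb (q ^ k) * K) * E ^ k" by (simp add: EkK mult.assoc)
  also have "\<dots> = emb (q ^ k) * (K ^ i * (F ^ j * K)) * E ^ k" by (simp only: cl mult.assoc)
  also have "\<dots> = emb (q ^ k) * (K ^ i * emb (inverse q ^ j) * K * F ^ j) * E ^ k" by (simp add: FjK mult.assoc)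
  also have "\<dots> = emb (q ^ k) * (emb (inverse q ^ j) * ((K ^ i * K) * F ^ j)) * E ^ k"
    by (simp only: cl[of "K ^ i" "inverse q ^ j"] mult.assoc)
  also have "\<dots> = emb (q ^ k) * emb (inverse q ^ j) * (K * K ^ i * F ^ j * E ^ k)"
    by (simp only: power_commutes mult.assoc)
  also have "\<dots> = emb (q ^ k * inverse q ^ j) * (K * mo (i, j, k))"
    unfolding mono_def by (simp add: emb_mult mult.assoc)
  finally show ?thesis .
qed

lemma q_nz: "q \<noteq> 0" using qn n_pos by (metis one_neq_zero power_0_left not_one_le_zero)

lemma I_comm: "I (x * K) = I (K * x)"
proof -
  let ?c = "co x"
  have x: "x = (\<Sum>m\<in>idx n. emb (?c m) * mo m)" using coord_spec[of x] unfolding lincomb_def by simp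
  have r: "I (emb (?c m) * mo m * K) = I (K * (emb (?c m) * mo m))" if m: "m \<in> idx n" for m
  proof -
    obtain i j k where mm: "m = (i, j, k)" by (cases m) auto
    have m': "(Suc i mod n, j, k) \<in> idx n" using m n_pos unfolding mm idx_def by auto
    have "I (emb (?c m) * mo m * K) = I (emb (?c m * (q ^ k * inverse q ^ j)) * mo (Suc i mod n, j, k))"
      unfolding mm by (simp add: mult.assoc mono_K K_mono emb_mult)
    also have "\<dots> = I (emb (?c m) * mo (Suc i mod n, j, k))"
      unfolding I_mono[OF m'] using q_nz by (auto simp: tgt_def power_inverse)
    also have "\<dots> = I (K * (emb (?c m) * mo m))"
      unfolding mm by (simp add: cl K_mono)
    finally show ?thesis .
  qed
  have "I (x * K) = (\<Sum>m\<in>idx n. I (emb (?c m) * mo m * K))"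
    by (subst x) (simp add: sum_distrib_right I_sum fin_idx)
  also have "\<dots> = (\<Sum>m\<in>idx n. I (K * (emb (?c m) * mo m)))" using r by simp
  also have "\<dots> = I (K * x)"
    by (subst (2) x) (simp add: sum_distrib_left I_sum fin_idx)
  finally show ?thesis .
qed

end

context uq begin

lemma emb_diff: "emb (x - y) = emb x - emb y"
  using emb_add[of "x - y" y] by (simp add: algebra_simps)

lemma T_vanish_gen:
  assumes g0: "is_form_inverse emb (twform emb n K F E 1) g0"
  shows "(\<Sum>p\<leftarrow>g0. fst p * (K * y) * snd p) = (\<Sum>p\<leftarrow>g0. fst p * (y * K) * snd p)"
proof -
  let ?B = "twform emb n K F E 1"
  have e1: "\<And>a. (\<Sum>p\<leftarrow>g0. fst p * emb (?B (snd p) a)) = a"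
    using g0 unfolding is_form_inverse_def by (simp add: case_prod_unfold)
  have e2: "\<And>a. (\<Sum>p\<leftarrow>g0. emb (?B a (fst p)) * snd p) = a"
    using g0 unfolding is_form_inverse_def by (simp add: case_prod_unfold)
  have BK: "?B b (a * K) = ?B (K * b) a" for a b
    unfolding twform_def using I_comm[of "b * a"] by (simp add: mult.assoc)
  have "(\<Sum>p\<leftarrow>g0. fst p * (K * y) * snd p) = (\<Sum>p\<leftarrow>g0. (fst p * K) * y * snd p)"
    by (simp add: mult.assoc)
  also have "\<dots> = (\<Sum>p\<leftarrow>g0. (\<Sum>r\<leftarrow>g0. fst r * emb (?B (snd r) (fst p * K))) * y * snd p)"
    using e1 by simp
  also have "\<dots> = (\<Sum>p\<leftarrow>g0. \<Sum>r\<leftarrow>g0. fst r * y * (emb (?B (snd r) (fst p * K)) * snd p))"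
    by (simp add: sl_mult_right mult.assoc cl emb_central)
  also have "\<dots> = (\<Sum>r\<leftarrow>g0. \<Sum>p\<leftarrow>g0. fst r * y * (emb (?B (K * snd r) (fst p)) * snd p))"
    by (subst sl_swap) (simp add: BK)
  also have "\<dots> = (\<Sum>r\<leftarrow>g0. fst r * y * (\<Sum>p\<leftarrow>g0. emb (?B (K * snd r) (fst p)) * snd p))"
    by (simp add: sl_mult_left)
  also have "\<dots> = (\<Sum>p\<leftarrow>g0. fst p * (y * K) * snd p)" using e2 by (simp add: mult.assoc)
  finally show ?thesis .
qed

lemma T_add: "(\<Sum>p\<leftarrow>g. fst p * (x + y) * snd p) = (\<Sum>p\<leftarrow>g. fst p * x * snd p) + (\<Sum>p\<leftarrow>g. fst p * y * snd p)" for x y :: 'a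
  by (induction g) (simp_all add: distrib_left distrib_right)

lemma T_zero: "(\<Sum>p\<leftarrow>g. fst p * (0::'a) * snd p) = 0"
  by (induction g) simp_all

lemma T_smult: "(\<Sum>p\<leftarrow>g. fst p * (emb c * x) * snd p) = emb c * (\<Sum>p\<leftarrow>g. fst p * x * snd p)" for x :: 'a
  by (simp add: sl_mult_left cl mult.assoc)

lemma T_sum: "finite A \<Longrightarrow> (\<Sum>p\<leftarrow>g. fst p * (\<Sum>a\<in>A. f a) * snd p) = (\<Sum>a\<in>A. \<Sum>p\<leftarrow>g. fst p * f a * snd p)" for f :: "_ \<Rightarrow> 'a"
  by (induction A rule: finite_induct) (simp_all add: T_add T_zero)

lemma r_ne1:
  assumes "j < n" "k < n" "j \<noteq> k"
  shows "q ^ k * inverse q ^ j \<noteq> 1"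
proof
  assume h: "q ^ k * inverse q ^ j = 1"
  have qz: "q \<noteq> 0" by (rule q_nz)
  have eq: "q ^ k = q ^ j" using h qz by (simp add: power_inverse field_simps)
  show False
  proof (cases "j < k")
    case True
    have "q ^ k = q ^ j * q ^ (k - j)" using True by (simp add: power_add[symmetric])
    then have "q ^ (k - j) = 1" using eq qz by simp
    then show False using prim True assms by auto
  next
    case False
    then have jk: "k < j" using assms by simp
    have "q ^ j = q ^ k * q ^ (j - k)" using jk by (simp add: power_add[symmetric])
    then have "q ^ (j - k) = 1" using eq qz by simp
    then show False using prim jk assms by auto
  qed
qed

lemma T_mono0:
  assumes g0: "is_form_inverse emb (twform emb n K F E 1) g0"
    and m: "(i, j, k) \<in> idx n" and jk: "j \<noteq> k"
  shows "(\<Sum>p\<leftarrow>g0. fst p * mo (i, j, k) * snd p) = 0"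
proof -
  let ?T = "\<lambda>x. (\<Sum>p\<leftarrow>g0. fst p * x * snd p)"
  let ?i0 = "(i + n - 1) mod n"
  let ?r = "q ^ k * inverse q ^ j"
  have ilt: "i < n" "j < n" "k < n" using m unfolding idx_def by auto
  have "Suc ?i0 mod n = (i + n) mod n" using n_pos
    by (metis Suc_diff_1 add_gr_0 less_le_trans mod_Suc_eq zero_less_one)
  also have "\<dots> = i" using ilt by simp
  finally have si: "Suc ?i0 mod n = i" .
  have x0: "K * mo (?i0, j, k) = mo (i, j, k)" using K_mono si by simp
  have "?T (mo (i, j, k)) = ?T (K * mo (?i0, j, k))" using x0 by simp
  also have "\<dots> = ?T (mo (?i0, j, k) * K)" by (rule T_vanish_gen[OF g0])
  also have "\<dots> = ?T (emb ?r * mo (i, j, k))" using mono_K x0 by simp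
  also have "\<dots> = emb ?r * ?T (mo (i, j, k))" by (rule T_smult)
  finally have h: "?T (mo (i, j, k)) = emb ?r * ?T (mo (i, j, k))" .
  have "emb (1 - ?r) * ?T (mo (i, j, k)) = 0"
    using h by (simp add: emb_diff left_diff_distrib emb_one)
  then have "emb (inverse (1 - ?r)) * (emb (1 - ?r) * ?T (mo (i, j, k))) = 0" by simp
  moreover have "inverse (1 - ?r) * (1 - ?r) = 1" using r_ne1[OF ilt(2,3) jk] by simp
  ultimately show ?thesis by (simp add: mult.assoc[symmetric] emb_mult[symmetric] emb_one)
qed

lemma T_deg0:
  assumes g0: "is_form_inverse emb (twform emb n K F E 1) g0"
  shows "(\<Sum>p\<leftarrow>g0. fst p * x * snd p) = (\<Sum>p\<leftarrow>g0. fst p * deg0 emb n K F E x * snd p)"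
proof -
  let ?T = "\<lambda>x. (\<Sum>p\<leftarrow>g0. fst p * x * snd p)"
  let ?D = "{m\<in>idx n. fst (snd m) = snd (snd m)}"
  let ?R = "{m\<in>idx n. fst (snd m) \<noteq> snd (snd m)}"
  let ?f = "\<lambda>m. emb (co x m) * ?T (mo m)"
  have fin: "finite ?D" "finite ?R" using fin_idx by auto
  have u: "idx n = ?D \<union> ?R" by auto
  have z: "?f m = 0" if "m \<in> ?R" for m
  proof -
    obtain i j k where mm: "m = (i, j, k)" by (cases m) auto
    show ?thesis using that T_mono0[OF g0, of i j k] unfolding mm by simp
  qed
  have "?T x = ?T (\<Sum>m\<in>idx n. emb (co x m) * mo m)"
    using coord_eq[of x] unfolding lincomb_def by simp
  also have "\<dots> = (\<Sum>m\<in>idx n. ?f m)" by (simp add: T_sum fin_idx T_smult)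
  also have "\<dots> = (\<Sum>m\<in>?D. ?f m) + (\<Sum>m\<in>?R. ?f m)"
    by (subst u, rule sum.union_disjoint) (use fin in auto)
  also have "(\<Sum>m\<in>?R. ?f m) = 0" using z by simp
  also have "(\<Sum>m\<in>?D. ?f m) = ?T (deg0 emb n K F E x)"
    unfolding deg0_def by (simp add: T_sum fin T_smult)
  finally show ?thesis by simp
qed

end

theorem mainTheorem7:
  fixes n :: nat and q :: complex
    and emb :: "complex \<Rightarrow> 'a::ring_1" and K E F :: 'a
    and u u' v v' :: 'a and gu gv :: "('a \<times> 'a) list"
  assumes n2: "n \<ge> 2"
    and prim: "q ^ n = 1" "\<forall>k. 0 < k \<and> k < n \<longrightarrow> q ^ k \<noteq> 1"
    and emb_add: "\<forall>x y. emb (x + y) = emb x + emb y"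
    and emb_mult: "\<forall>x y. emb (x * y) = emb x * emb y"
    and emb_one: "emb 1 = 1"
    and emb_central: "\<forall>c a. emb c * a = a * emb c"
    and relK: "K ^ n = 1"
    and relE: "E ^ n = 0" and relF: "F ^ n = 0"
    and relEK: "E * K = emb q * K * E"
    and relFK: "F * K = emb (inverse q) * K * F"
    and relEF: "E * F - F * E = emb (1 / (q - inverse q)) * (K - K ^ (n - 1))"
    and basis: "is_pbw_basis emb n K F E"
    and u_inv: "u * u' = 1" "u' * u = 1"
    and v_inv: "v * v' = 1" "v' * v = 1"
    and same0: "deg0 emb n K F E u' = deg0 emb n K F E v'"
    and gu: "is_form_inverse emb (twform emb n K F E u) gu"
    and gv: "is_form_inverse emb (twform emb n K F E v) gv"
  shows "ell gu = ell gv"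
proof -
  note ec = emb_central
  interpret uq n q emb K E F
    apply unfold_locales
    using n2 apply simp
    using prim emb_add emb_mult emb_one emb_central relK relEK relFK basis by blast+
  let ?B0 = "twform emb n K F E 1"
  let ?T = "\<lambda>x. (\<Sum>p\<leftarrow>map (\<lambda>(a, b). (a, u * b)) gu. fst p * x * snd p)"
  have g0: "is_form_inverse emb ?B0 (map (\<lambda>(a, b). (a, u * b)) gu)"
    by (rule transfer_inv[OF ec gu, of _ "u'" u])
       (simp_all add: twform_def u_inv mult.assoc[symmetric])
  have ellw: "ell gw = ?T w'"
    if wi: "w * w' = 1" "w' * w = 1" and gw: "is_form_inverse emb (twform emb n K F E w) gw" for w w' gw
  proof -
    have h: "is_form_inverse emb (twform emb n K F E w)
        (map (\<lambda>(a, b). (a, w' * b)) (map (\<lambda>(a, b). (a, u * b)) gu))"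
      by (rule transfer_inv[OF ec g0, of _ w w'])
         (simp_all add: twform_def wi mult.assoc[symmetric])
    have "ell gw = ell (map (\<lambda>(a, b). (a, w' * b)) (map (\<lambda>(a, b). (a, u * b)) gu))"
      by (rule ell_unique[OF gw h])
    also have "\<dots> = ?T w'"
      unfolding ell_def by (simp add: case_prod_unfold o_def mult.assoc)
    finally show ?thesis .
  qed
  have "ell gu = ?T u'" by (rule ellw[OF u_inv gu])
  also have "\<dots> = ?T (deg0 emb n K F E u')" by (rule T_deg0[OF g0])
  also have "\<dots> = ?T (deg0 emb n K F E v')" by (simp add: same0)
  also have "\<dots> = ?T v'" by (rule T_deg0[OF g0, symmetric])
  also have "\<dots> = ell gv" by (rule ellw[OF v_inv gv, symmetric])
  finally show ?thesis .
qed

end
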